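(* Let $\lambda\in\mathbb Z^n\setminus\{0\}$ have coprime coefficients and let $\{\gamma_1,\dots,\gamma_{n-1}\}\subseteq\mathcal N(\lambda)$ be linearly independent in $\mathbb Q^n$. If $\alpha,\beta\in\mathbb N_0^n$ satisfy $[\mathbf X^\alpha-\mathbf X^\beta](\gamma_i)=0$ for each $i=1,\dots,n-1$, then $\mathbf X^{\lambda^+}-\mathbf X^{\lambda^-}$ divides $\mathbf X^\alpha-\mathbf X^\beta$ in $\mathbb Z[X_1,\dots,X_n]$.
   Context: For $\alpha\in\mathbb N_0^n$, $\mathbf X^\alpha=\prod_iX_i^{(\alpha)_i}$. For $\gamma\in\mathbb Z^n$ and a polynomial $p$, $p(\gamma)\in\mathbb Q(x)$ is the image of $p$ under $X_i\mapsto x^{(\gamma)_i}$. $\lambda^+,\lambda^-\in\mathbb N_0^n$ are the unique vectors with $\lambda=\lambda^+-\lambda^-$, $\lambda^+\cdot\lambda^-=0$. Coprime coefficients: gcd of coordinates equals $1$. $\mathcal N(\lambda)=\{\alpha\in\mathbb Z^n:\lambda\cdot\alpha=0\}$. *)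

theory Defs
  imports "HOL-Library.Cardinality" "HOL-Library.Poly_Mapping" "HOL-Computational_Algebra.Polynomial_Factorial"
begin

(* Polynomials in Z[X_i : i in 'n] (n = CARD('n)) are finitely supported maps
   from exponent vectors to int; product = convolution (HOL-Library.Poly_Mapping). *)

type_synonym 'n zpoly = "('n \<Rightarrow>\<^sub>0 nat) \<Rightarrow>\<^sub>0 int"

definition Xmon :: "('n \<Rightarrow>\<^sub>0 nat) \<Rightarrow> 'n zpoly" where
  "Xmon \<alpha> = Poly_Mapping.single \<alpha> 1"

definition expvec :: "('n::finite \<Rightarrow> nat) \<Rightarrow> ('n \<Rightarrow>\<^sub>0 nat)" where
  "expvec f = Abs_poly_mapping f"

definition posp :: "('n \<Rightarrow> int) \<Rightarrow> ('n \<Rightarrow> nat)" where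
  "posp l = (\<lambda>i. nat (l i))"

definition negp :: "('n \<Rightarrow> int) \<Rightarrow> ('n \<Rightarrow> nat)" where
  "negp l = (\<lambda>i. nat (- l i))"

(* p(gamma) in Q(x) = rat poly fract: image of p under X_i -> x^(gamma i). *)
definition eval_at :: "('n::finite \<Rightarrow> int) \<Rightarrow> 'n zpoly \<Rightarrow> rat poly fract" where
  "eval_at \<gamma> p = (\<Sum>(m :: 'n \<Rightarrow>\<^sub>0 nat)\<in>Poly_Mapping.keys p. of_int (Poly_Mapping.lookup p m) *
      (\<Prod>i\<in>UNIV. (to_fract [:0, 1:]) powi (\<gamma> i * int (Poly_Mapping.lookup m i))))"

end

theory Submission imports Defs "HOL-Analysis.Cartesian_Space" begin


lemma to_fract_power': "to_fract (p ^ n) = to_fract p ^ n"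
  by (induction n) simp_all

lemma prod_powi: "finite A \<Longrightarrow> (x::'a::field) \<noteq> 0 \<Longrightarrow> (\<Prod>i\<in>A. x powi f i) = x powi (\<Sum>i\<in>A. f i)"
  by (induction A rule: finite_induct) (auto simp: power_int_add)

lemma Xpow_inj:
  assumes "to_fract [:0, 1::rat:] powi a = to_fract [:0, 1:] powi b"
  shows "a = b"
proof -
  let ?x = "to_fract [:0, 1::rat:]"
  have x0: "?x \<noteq> 0" by simp
  have key: "d = 0" if "?x powi d = 1" "d \<ge> 0" for d
  proof -
    have "?x ^ nat d = 1" using that by (simp add: power_int_nonneg_exp)
    hence "to_fract ([:0, 1::rat:] ^ nat d) = to_fract 1" by (simp add: to_fract_power')
    hence "[:0, 1::rat:] ^ nat d = 1" by (metis to_fract_1 to_fract_eq_iff)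
    hence "degree ([:0, 1::rat:] ^ nat d) = 0" by simp
    hence "nat d = 0" by (simp add: degree_power_eq)
    thus ?thesis using that by simp
  qed
  show ?thesis
  proof (cases "a \<le> b")
    case True
    have "?x powi (b - a) = 1" using assms x0 by (simp add: power_int_diff)
    then show ?thesis using key[of "b-a"] True by simp
  next
    case False
    have "?x powi (a - b) = 1" using assms x0 by (simp add: power_int_diff)
    then show ?thesis using key[of "a-b"] False by simp
  qed
qed

lemma eval_diff:
  fixes \<gamma> :: "'n::finite \<Rightarrow> int"
  assumes "eval_at \<gamma> (Xmon \<alpha> - Xmon \<beta>) = 0"
  shows "(\<Sum>i\<in>UNIV. \<gamma> i * int (Poly_Mapping.lookup \<alpha> i)) = (\<Sum>i\<in>UNIV. \<gamma> i * int (Poly_Mapping.lookup \<beta> i))"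
proof (cases "\<alpha> = \<beta>")
  case True thus ?thesis by simp
next
  case False
  let ?x = "to_fract [:0, 1::rat:]"
  define E where "E m = (\<Prod>i\<in>UNIV. ?x powi (\<gamma> i * int (Poly_Mapping.lookup m i)))" for m :: "'n \<Rightarrow>\<^sub>0 nat"
  have EE: "E m = ?x powi (\<Sum>i\<in>UNIV. \<gamma> i * int (Poly_Mapping.lookup m i))" for m
    unfolding E_def by (rule prod_powi) auto
  have lk: "Poly_Mapping.lookup (Xmon \<alpha> - Xmon \<beta>) m = (if m = \<alpha> then 1 else if m = \<beta> then -1 else 0)" for m :: "'n \<Rightarrow>\<^sub>0 nat"
    using False unfolding Xmon_def lookup_minus lookup_single when_def by auto
  have keys: "Poly_Mapping.keys (Xmon \<alpha> - Xmon \<beta>) = {\<alpha>, \<beta>}"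
    using False by (intro set_eqI) (simp only: in_keys_iff lk, auto)
  have "eval_at \<gamma> (Xmon \<alpha> - Xmon \<beta>) = E \<alpha> - E \<beta>"
    unfolding eval_at_def keys E_def lk using False by simp
  with assms have "E \<alpha> = E \<beta>" by simp
  thus ?thesis unfolding EE by (rule Xpow_inj)
qed



definition dotq :: "rat^'n::finite \<Rightarrow> rat^'n \<Rightarrow> rat" where
  "dotq x y = (\<Sum>i\<in>UNIV. x$i * y$i)"

lemma dotq_comm: "dotq x y = dotq y x"
  unfolding dotq_def by (simp add: mult.commute)

lemma dotq_sum: "finite S \<Longrightarrow> dotq (\<Sum>x\<in>S. f x *s x) y = (\<Sum>x\<in>S. f x * dotq x y)"
  unfolding dotq_def by (simp add: sum_component sum_distrib_left sum_distrib_right mult.assoc sum.swap[of _ S])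

lemma dotq_diff: "dotq (x - c *s z) y = dotq x y - c * dotq z y"
  unfolding dotq_def by (simp add: algebra_simps sum_subtractf sum_distrib_left)

lemma dotq_self0: "dotq x x = 0 \<Longrightarrow> x = 0"
proof -
  assume "dotq x x = 0"
  hence "(\<Sum>i\<in>UNIV. x$i * x$i) = 0" unfolding dotq_def .
  hence "\<forall>i\<in>UNIV. x$i * x$i = 0" by (subst (asm) sum_nonneg_eq_0_iff) auto
  thus "x = 0" by (simp add: vec_eq_iff)
qed

lemma lin_alg:
  fixes lam :: "'n::finite \<Rightarrow> int" and g :: "nat \<Rightarrow> 'n \<Rightarrow> int" and a :: "'n \<Rightarrow> int"
  assumes lam0: "lam \<noteq> (\<lambda>_. 0)"
    and orth: "\<And>k. k < CARD('n) - 1 \<Longrightarrow> (\<Sum>i\<in>UNIV. lam i * g k i) = 0"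
    and indep: "\<And>c :: nat \<Rightarrow> rat. (\<forall>j. (\<Sum>k<CARD('n) - 1. c k * of_int (g k j)) = 0)
            \<Longrightarrow> (\<forall>k<CARD('n) - 1. c k = 0)"
    and orthA: "\<And>k. k < CARD('n) - 1 \<Longrightarrow> (\<Sum>i\<in>UNIV. g k i * a i) = 0"
  shows "\<exists>d::rat. \<forall>i. of_int (a i) = d * of_int (lam i)"
proof -
  define N where "N = CARD('n)"
  define K where "K = {..<N-1}"
  define G :: "nat \<Rightarrow> rat^'n" where "G k = (\<chi> i. of_int (g k i))" for k
  define L :: "rat^'n" where "L = (\<chi> i. of_int (lam i))"
  define V :: "rat^'n" where "V = (\<chi> i. of_int (a i))"
  have GL: "dotq (G k) L = 0" if "k \<in> K" for k
  proof -
    have "dotq (G k) L = of_int (\<Sum>i\<in>UNIV. lam i * g k i)"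
      unfolding dotq_def G_def L_def by (simp add: mult.commute)
    moreover have "(\<Sum>i\<in>UNIV. lam i * g k i) = 0" using orth[of k] that by (simp add: K_def N_def)
    ultimately show ?thesis by simp
  qed
  have GV: "dotq (G k) V = 0" if "k \<in> K" for k
  proof -
    have "dotq (G k) V = of_int (\<Sum>i\<in>UNIV. g k i * a i)"
      unfolding dotq_def G_def V_def by simp
    moreover have "(\<Sum>i\<in>UNIV. g k i * a i) = 0" using orthA[of k] that by (simp add: K_def N_def)
    ultimately show ?thesis by simp
  qed
  have L0: "L \<noteq> 0" using lam0 by (auto simp: L_def vec_eq_iff)
  hence LL: "dotq L L \<noteq> 0" using dotq_self0 by blast
  define d where "d = dotq V L / dotq L L"
  define W where "W = V - d *s L"
  have WL: "dotq W L = 0" unfolding W_def dotq_diff d_def using LL by simp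
  have WG: "dotq W (G k) = 0" if "k \<in> K" for k
    unfolding W_def dotq_diff using GL[OF that] GV[OF that] by (simp add: dotq_comm)
  show ?thesis
  proof (cases "W = 0")
    case True
    hence "V = d *s L" unfolding W_def by simp
    hence "\<forall>i. of_int (a i) = d * of_int (lam i)"
      by (simp add: vec_eq_iff V_def L_def)
    thus ?thesis by blast
  next
    case False
    hence WW: "dotq W W \<noteq> 0" using dotq_self0 by blast
    have injG: "inj_on G K"
    proof (rule inj_onI, rule ccontr)
      fix k l assume kl: "k \<in> K" "l \<in> K" "G k = G l" "k \<noteq> l"
      define c :: "nat \<Rightarrow> rat" where "c m = (if m = k then 1 else if m = l then -1 else 0)" for m
      have "(\<Sum>m<CARD('n) - 1. c m * of_int (g m j)) = 0" for j
      proof -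
        have "c m * of_int (g m j) = (if m = k then of_int (g k j) else 0) - (if m = l then of_int (g l j) else 0)" for m
          using kl(4) by (simp add: c_def)
        hence "(\<Sum>m<CARD('n) - 1. c m * of_int (g m j)) = of_int (g k j) - of_int (g l j)"
          using kl(1,2) by (simp add: sum_subtractf K_def N_def)
        also have "\<dots> = 0" using kl(3) by (simp add: G_def vec_eq_iff)
        finally show ?thesis .
      qed
      hence "c k = 0" using indep[of c] kl(1) by (simp add: K_def N_def)
      thus False by (simp add: c_def)
    qed
    have LnG: "L \<notin> G ` K" using GL LL by (auto simp: dotq_comm)
    have WnG: "W \<notin> G ` K" using WG WW by (auto simp: dotq_comm)
    have LW: "L \<noteq> W" using WL LL by auto
    define S where "S = insert L (insert W (G ` K))"
    have finS: "finite S" by (simp add: S_def K_def)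
    have cardS: "card S = N + 1"
    proof -
      have "card (G ` K) = N - 1" using card_image[OF injG] by (simp add: K_def)
      moreover have "N > 0" unfolding N_def by simp
      ultimately show ?thesis using LnG WnG LW by (simp add: S_def K_def)
    qed
    have "vec.independent S"
    proof (rule vec.independent_if_scalars_zero[OF finS])
      fix f x assume eq: "(\<Sum>x\<in>S. f x *s x) = 0" and xS: "x \<in> S"
      have orthS: "dotq z y = 0" if "y \<in> {L, W}" "z \<in> S" "z \<noteq> y" for y z
        using that WL GL WG by (auto simp: S_def dotq_comm)
      have fy: "f y = 0" if "y \<in> {L, W}" for y
      proof -
        have "0 = dotq (\<Sum>x\<in>S. f x *s x) y" using eq by (simp add: dotq_def)
        also have "\<dots> = (\<Sum>x\<in>S. f x * dotq x y)" by (rule dotq_sum[OF finS])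
        also have "\<dots> = f y * dotq y y + (\<Sum>x\<in>S - {y}. f x * dotq x y)"
          using that finS by (subst sum.remove[of S y]) (auto simp: S_def)
        also have "(\<Sum>x\<in>S - {y}. f x * dotq x y) = 0"
          using orthS[OF that] by (intro sum.neutral) auto
        finally show ?thesis using that LL WW by auto
      qed
      have "(\<Sum>x\<in>G ` K. f x *s x) = (\<Sum>x\<in>S. f x *s x)"
        using fy finS by (intro sum.mono_neutral_left) (auto simp: S_def)
      hence "(\<Sum>k\<in>K. f (G k) *s G k) = 0" using eq by (simp add: sum.reindex[OF injG])
      hence "\<forall>j. (\<Sum>k<CARD('n) - 1. f (G k) * of_int (g k j)) = 0"
        by (simp add: vec_eq_iff sum_component G_def K_def N_def)
      hence fG: "\<forall>k<CARD('n) - 1. f (G k) = 0" by (rule indep)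
      show "f x = 0"
      proof (cases "x \<in> {L, W}")
        case True thus ?thesis by (rule fy)
      next
        case False thus ?thesis using xS fG by (auto simp: S_def K_def N_def)
      qed
    qed
    hence "card S \<le> vec.dim (UNIV :: (rat^'n) set)"
      by (intro vec.independent_card_le_dim) auto
    hence "card S \<le> N" by (simp add: card_cart_basis N_def)
    with cardS show ?thesis by simp
  qed
qed



lemma integral_d:
  fixes lam a :: "'n \<Rightarrow> int" and d :: rat
  assumes "Gcd (range lam) = 1" and "\<forall>i. of_int (a i) = d * of_int (lam i)"
  shows "\<exists>t::int. \<forall>i. a i = t * lam i"
proof -
  obtain p q where pq: "quotient_of d = (p, q)" by (cases "quotient_of d") auto
  have q0: "q > 0" using quotient_of_denom_pos[OF pq] .
  have cop: "coprime p q" using quotient_of_coprime[OF pq] .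
  have d: "d = of_int p / of_int q" using quotient_of_div[OF pq] .
  have eq: "a i * q = p * lam i" for i
  proof -
    have "of_int (a i) = (of_int p / of_int q) * (of_int (lam i) :: rat)" using assms(2) d by simp
    hence "of_int (a i) * of_int q = (of_int p * of_int (lam i) :: rat)" using q0 by (simp add: field_simps)
    hence "of_int (a i * q) = (of_int (p * lam i) :: rat)" by simp
    thus ?thesis by (simp only: of_int_eq_iff)
  qed
  have "q dvd lam i" for i
  proof -
    have "q dvd p * lam i" using eq[of i] by (metis dvd_triv_right)
    thus ?thesis using cop by (simp add: coprime_dvd_mult_right_iff coprime_commute)
  qed
  hence "q dvd Gcd (range lam)" by (intro Gcd_greatest) auto
  hence "q = 1" using assms(1) q0 by simp
  thus ?thesis using eq by auto
qed

lemma lookup_expvec: "Poly_Mapping.lookup (expvec (f :: 'n::finite \<Rightarrow> nat)) = f"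
  unfolding expvec_def by (rule lookup_Abs_poly_mapping) simp

lemma Xmon_mult: "Xmon a * Xmon b = Xmon (a + b)"
  unfolding Xmon_def by (simp add: mult_single)

lemma Xmon_pow: "Xmon (a :: 'n::finite \<Rightarrow>\<^sub>0 nat) ^ t = Xmon (expvec (\<lambda>i. t * Poly_Mapping.lookup a i))"
proof (induction t)
  case 0
  have "expvec (\<lambda>i. 0 * Poly_Mapping.lookup a i) = 0"
    by (rule poly_mapping_eqI) (simp add: lookup_expvec)
  thus ?case by (simp add: Xmon_def)
next
  case (Suc t)
  have "a + expvec (\<lambda>i. t * Poly_Mapping.lookup a i) = expvec (\<lambda>i. Suc t * Poly_Mapping.lookup a i)"
    by (rule poly_mapping_eqI) (simp add: lookup_expvec lookup_add)
  thus ?case using Suc by (simp add: Xmon_mult)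
qed

lemma arith_aux:
  assumes h: "int a - int b = int t * l"
  shows "min a b + t * nat l = a"
proof (cases "l \<ge> 0")
  case True
  have m: "int (t * nat l) = int t * l" using True by simp
  have "int t * l \<ge> 0" using True by simp
  hence "b \<le> a" using h by linarith
  hence "min a b = b" by simp
  moreover have "int (b + t * nat l) = int a" using m h by linarith
  ultimately show ?thesis by linarith
next
  case False
  hence "nat l = 0" by simp
  moreover have "int t * l \<le> 0" using False by (simp add: mult_nonneg_nonpos)
  hence "a \<le> b" using h by linarith
  ultimately show ?thesis by simp
qed

lemma dvd_pos:
  fixes lam :: "'n::finite \<Rightarrow> int" and \<alpha> \<beta> :: "'n \<Rightarrow>\<^sub>0 nat"
  assumes "\<forall>i. int (Poly_Mapping.lookup \<alpha> i) - int (Poly_Mapping.lookup \<beta> i) = int t * lam i"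
  shows "(Xmon (expvec (posp lam)) - Xmon (expvec (negp lam))) dvd (Xmon \<alpha> - Xmon \<beta>)"
proof -
  define c where "c = expvec (\<lambda>i. min (Poly_Mapping.lookup \<alpha> i) (Poly_Mapping.lookup \<beta> i))"
  let ?P = "Xmon (expvec (posp lam))" and ?N = "Xmon (expvec (negp lam))"
  have A: "Xmon c * ?P ^ t = Xmon \<alpha>"
    unfolding Xmon_pow Xmon_mult
  proof (rule arg_cong[where f=Xmon], rule poly_mapping_eqI)
    fix i
    have "int (Poly_Mapping.lookup \<alpha> i) - int (Poly_Mapping.lookup \<beta> i) = int t * lam i" using assms by blast
    from arith_aux[OF this]
    show "Poly_Mapping.lookup (c + expvec (\<lambda>i. t * Poly_Mapping.lookup (expvec (posp lam)) i)) i = Poly_Mapping.lookup \<alpha> i"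
      by (simp add: lookup_add lookup_expvec c_def posp_def)
  qed
  have B: "Xmon c * ?N ^ t = Xmon \<beta>"
    unfolding Xmon_pow Xmon_mult
  proof (rule arg_cong[where f=Xmon], rule poly_mapping_eqI)
    fix i
    have "int (Poly_Mapping.lookup \<beta> i) - int (Poly_Mapping.lookup \<alpha> i) = int t * (- lam i)" using assms by (metis minus_diff_eq mult_minus_right)
    from arith_aux[OF this]
    show "Poly_Mapping.lookup (c + expvec (\<lambda>i. t * Poly_Mapping.lookup (expvec (negp lam)) i)) i = Poly_Mapping.lookup \<beta> i"
      by (simp add: lookup_add lookup_expvec c_def negp_def min.commute)
  qed
  have "Xmon \<alpha> - Xmon \<beta> = Xmon c * (?P ^ t - ?N ^ t)"
    using A B by (simp add: right_diff_distrib)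
  also have "\<dots> = Xmon c * ((?P - ?N) * (\<Sum>i<t. ?N^(t - Suc i) * ?P^i))"
    by (simp only: power_diff_sumr2)
  finally show ?thesis by (simp only: dvd_mult dvd_triv_left)
qed


theorem lemma3p5:
  fixes lam :: "'n::finite \<Rightarrow> int"
    and g :: "nat \<Rightarrow> 'n \<Rightarrow> int"
    and \<alpha> \<beta> :: "'n \<Rightarrow>\<^sub>0 nat"
  assumes "lam \<noteq> (\<lambda>_. 0)"
    and "Gcd (range lam) = 1"
    and "\<And>k. k < CARD('n) - 1 \<Longrightarrow> (\<Sum>i\<in>UNIV. lam i * g k i) = 0"
    and "\<And>c :: nat \<Rightarrow> rat. (\<forall>j. (\<Sum>k<CARD('n) - 1. c k * of_int (g k j)) = 0)
            \<Longrightarrow> (\<forall>k<CARD('n) - 1. c k = 0)"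
    and "\<And>k. k < CARD('n) - 1 \<Longrightarrow> eval_at (g k) (Xmon \<alpha> - Xmon \<beta>) = 0"
  shows "(Xmon (expvec (posp lam)) - Xmon (expvec (negp lam))) dvd (Xmon \<alpha> - Xmon \<beta>)"
proof -
  define a where "a i = int (Poly_Mapping.lookup \<alpha> i) - int (Poly_Mapping.lookup \<beta> i)" for i
  have oa: "(\<Sum>i\<in>UNIV. g k i * a i) = 0" if "k < CARD('n) - 1" for k
  proof -
    have "(\<Sum>i\<in>UNIV. g k i * int (Poly_Mapping.lookup \<alpha> i)) = (\<Sum>i\<in>UNIV. g k i * int (Poly_Mapping.lookup \<beta> i))"
      by (rule eval_diff) (rule assms(5)[OF that])
    thus ?thesis by (simp add: a_def right_diff_distrib sum_subtractf)
  qed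
  have "\<exists>d::rat. \<forall>i. of_int (a i) = d * of_int (lam i)"
  proof (rule lin_alg[of lam g a])
    show "lam \<noteq> (\<lambda>_. 0)" by (fact assms(1))
    show "\<And>k. k < CARD('n) - 1 \<Longrightarrow> (\<Sum>i\<in>UNIV. lam i * g k i) = 0" by (fact assms(3))
    show "\<And>c :: nat \<Rightarrow> rat. (\<forall>j. (\<Sum>k<CARD('n) - 1. c k * of_int (g k j)) = 0)
            \<Longrightarrow> (\<forall>k<CARD('n) - 1. c k = 0)" by (fact assms(4))
    show "\<And>k. k < CARD('n) - 1 \<Longrightarrow> (\<Sum>i\<in>UNIV. g k i * a i) = 0" by (fact oa)
  qed
  then obtain d :: rat where "\<forall>i. of_int (a i) = d * of_int (lam i)" by blast
  then obtain t where t: "\<forall>i. a i = t * lam i" using integral_d[OF assms(2)] by blast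
  show ?thesis
  proof (cases "t \<ge> 0")
    case True
    have "\<forall>i. int (Poly_Mapping.lookup \<alpha> i) - int (Poly_Mapping.lookup \<beta> i) = int (nat t) * lam i"
      using t True by (simp add: a_def)
    thus ?thesis by (rule dvd_pos)
  next
    case False
    have "\<forall>i. int (Poly_Mapping.lookup \<beta> i) - int (Poly_Mapping.lookup \<alpha> i) = int (nat (-t)) * lam i"
      using t False by (simp add: a_def) (metis minus_diff_eq mult_minus_left)
    hence "(Xmon (expvec (posp lam)) - Xmon (expvec (negp lam))) dvd (Xmon \<beta> - Xmon \<alpha>)" by (rule dvd_pos)
    hence "(Xmon (expvec (posp lam)) - Xmon (expvec (negp lam))) dvd - (Xmon \<alpha> - Xmon \<beta>)" by simp
    thus ?thesis by (simp only: dvd_minus_iff)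
  qed
qed

end
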